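(* Let $\Gamma=(a_1,\dots,a_m)\in\mathbb{Z}^m$ be a multiset of integers with $a_i=1$ for some $i$. For $n\ge1$ let $\Gamma_n=(k_1,\dots,k_m)$ with $k_i=a_i \bmod n$, viewed as a multiset in $\mathbb{Z}_n$. Then there exists a positive integer $N=N(\Gamma)$ such that for every $n>N$ and every $v\in\mathbb{Z}_n$: if $v\Gamma_n=\Gamma_n$ as multisets, then $v\in\{-1,0,1\}$ (in $\mathbb{Z}_n$).
   Context: For $v\in\mathbb{Z}_n$, $v\Gamma_n$ denotes the multiset $(vk_1,\dots,vk_m)$ with multiplication in $\mathbb{Z}_n$. *)

theory Defs
  imports "HOL-Library.Multiset" "HOL-Number_Theory.Cong"
begin

definition reduce_mset :: "int \<Rightarrow> int multiset \<Rightarrow> int multiset" where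
  "reduce_mset n \<Gamma> = image_mset (\<lambda>a. a mod n) \<Gamma>"

definition scale_mset :: "int \<Rightarrow> int \<Rightarrow> int multiset \<Rightarrow> int multiset" where
  "scale_mset n v M = image_mset (\<lambda>k. (v * k) mod n) M"

end

theory Submission
  imports Defs
begin

lemma dvd_small: "(n::int) dvd d \<Longrightarrow> \<bar>d\<bar> < n \<Longrightarrow> d = 0"
proof (rule ccontr)
  assume "n dvd d" "\<bar>d\<bar> < n" "d \<noteq> 0"
  then have "n dvd \<bar>d\<bar>" "\<bar>d\<bar> \<noteq> 0" by simp_all
  then have "\<bar>n\<bar> \<le> \<bar>\<bar>d\<bar>\<bar>" using dvd_imp_le_int by metis
  then show False using \<open>\<bar>d\<bar> < n\<close> by simp
qed

lemma eq_of_mod: "(x::int) mod n = b mod n \<Longrightarrow> \<bar>x - b\<bar> < n \<Longrightarrow> x = b"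
  using dvd_small[of n "x - b"] by (simp add: mod_eq_dvd_iff)

theorem lemma3:
  fixes \<Gamma> :: "int multiset"
  assumes "1 \<in># \<Gamma>"
  shows "\<exists>N::int. N > 0 \<and>
           (\<forall>n::int. n > N \<longrightarrow>
              (\<forall>v::int. 0 \<le> v \<and> v < n \<longrightarrow>
                 scale_mset n v (reduce_mset n \<Gamma>) = reduce_mset n \<Gamma> \<longrightarrow>
                 [v = -1] (mod n) \<or> [v = 0] (mod n) \<or> [v = 1] (mod n)))"
proof -
  define B where "B = Max (abs ` set_mset \<Gamma>)"
  have fin: "finite (abs ` set_mset \<Gamma>)" by simp
  have Bb: "\<And>a. a \<in># \<Gamma> \<Longrightarrow> \<bar>a\<bar> \<le> B" unfolding B_def using fin by auto
  have B1: "B \<ge> 1" using Bb[OF assms] by simp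
  show ?thesis
  proof (intro exI[of _ "B*B+B+1"] conjI allI impI)
    show "B*B+B+1 > 0" using B1 by (smt (verit) mult_nonneg_nonneg)
  next
    fix n v :: int
    assume n: "n > B*B+B+1" and v: "0 \<le> v \<and> v < n"
      and eq: "scale_mset n v (reduce_mset n \<Gamma>) = reduce_mset n \<Gamma>"
    have BB: "B \<le> B*B" using B1 by (simp add: mult_le_cancel_left1)
    define S where "S = (\<lambda>a. a mod n) ` set_mset \<Gamma>"
    have S: "(\<lambda>k. v*k mod n) ` S = S"
      using arg_cong[OF eq, of set_mset] unfolding S_def scale_mset_def reduce_mset_def
      by simp
    have n1: "n > 1" using n B1 BB by linarith
    have pw: "v^k mod n \<in> S" for k
    proof (induction k)
      case 0
      have "1 mod n = 1" using n1 by simp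
      then show ?case using assms unfolding S_def by (metis image_eqI power_0)
    next
      case (Suc k)
      have "v * (v^k mod n) mod n \<in> S" using Suc S by blast
      then show ?case by (simp add: mod_mult_right_eq)
    qed
    obtain a where a: "a \<in># \<Gamma>" "v mod n = a mod n"
      using pw[of 1] unfolding S_def by auto
    have ak: "\<bar>a^k\<bar> \<le> B" for k
    proof (induction k)
      case 0 then show ?case using B1 by simp
    next
      case (Suc k)
      have "a^(Suc k) mod n = v^(Suc k) mod n" using a(2) by (metis power_mod)
      then obtain b where b: "b \<in># \<Gamma>" "a^(Suc k) mod n = b mod n"
        using pw[of "Suc k"] unfolding S_def by auto
      have "\<bar>a^(Suc k)\<bar> = \<bar>a\<bar> * \<bar>a^k\<bar>" by (simp add: abs_mult)
      also have "\<dots> \<le> B * B" using Bb[OF a(1)] Suc by (simp add: mult_mono)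
      finally have "\<bar>a^(Suc k) - b\<bar> < n" using Bb[OF b(1)] n by linarith
      then have "a^(Suc k) = b" using eq_of_mod b(2) by blast
      then show ?case using Bb[OF b(1)] by simp
    qed
    have "\<bar>a\<bar> \<le> 1"
    proof (rule ccontr)
      assume "\<not> \<bar>a\<bar> \<le> 1"
      then have "\<bar>a\<bar> \<ge> 2" by simp
      then have "\<bar>a\<bar>^(nat B) \<ge> 2^(nat B)" by (simp add: power_mono)
      moreover have "(2::int)^(nat B) > int (nat B)"
        using less_exp[of "nat B"] by (metis of_nat_less_iff of_nat_numeral of_nat_power)
      moreover have "\<bar>a^(nat B)\<bar> = \<bar>a\<bar>^(nat B)" by (simp add: power_abs)
      ultimately have "int (nat B) < \<bar>a^(nat B)\<bar>" by linarith
      then show False using ak[of "nat B"] B1 by simp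
    qed
    then have "a = -1 \<or> a = 0 \<or> a = 1" by auto
    then show "[v = -1] (mod n) \<or> [v = 0] (mod n) \<or> [v = 1] (mod n)"
      using a(2) unfolding cong_def by auto
  qed
qed

end
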